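(* Let $x\ge0$. Then for all $\alpha,\lambda\in[0,1]$, \[ 0\le\log\frac{1+\lambda x+(1+\sqrt{1-\alpha}\,x)^\lambda-(1+\lambda\sqrt{1-\alpha}\,x)}{(1+x)^\lambda}\le\alpha\frac{\lambda(1-\lambda)}{2}x^2 . \] *)

theory Defs
  imports Complex_Main
begin

end

theory Submission
  imports Defs
begin
lemma pw_le1: "(t::real) \<ge> 0 \<Longrightarrow> e \<le> 0 \<Longrightarrow> (1+t) powr e \<le> 1"
  using powr_mono[of e 0 "1+t"] by simp

lemma dpw: "(t::real) > -1 \<Longrightarrow> ((\<lambda>u. (1+u) powr e) has_real_derivative e * (1+t) powr (e-1)) (at t)"
  using DERIV_fun_powr[of "\<lambda>u. 1+u" 1 t e] by (auto intro!: derivative_eq_intros)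

lemma bern:
  fixes t l :: real assumes "t \<ge> 0" "l \<le> 1"
  shows "1 + (l-1)*t \<le> (1+t) powr (l-1)"
proof -
  have "(\<lambda>u. (1+u) powr (l-1) - (l-1)*u) 0 \<le> (\<lambda>u. (1+u) powr (l-1) - (l-1)*u) t"
  proof (rule DERIV_nonneg_imp_nondecreasing[OF assms(1)])
    fix u assume u: "0 \<le> u" "u \<le> t"
    have d: "((\<lambda>u. (1+u) powr (l-1) - (l-1)*u) has_real_derivative
        (l-1) * (1+u) powr (l-1-1) - (l-1)*1) (at u)"
      by (rule DERIV_diff[OF dpw DERIV_cmult[OF DERIV_ident]]) (use u in auto)
    have "(1+u) powr (l-1-1) \<le> 1" using u assms by (intro pw_le1) auto
    hence "0 \<le> (l-1) * (1+u) powr (l-1-1) - (l-1)*1"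
      using assms by (simp add: mult_le_cancel_left1)
    with d show "\<exists>y. ((\<lambda>u. (1+u) powr (l-1) - (l-1)*u) has_real_derivative y) (at u) \<and> 0 \<le> y"
      by blast
  qed
  thus ?thesis by simp
qed

lemma lowb:
  fixes x y l :: real assumes "0 \<le> y" "y \<le> x" "0 \<le> l" "l \<le> 1"
  shows "(1+x) powr l - l*x \<le> (1+y) powr l - l*y"
proof -
  have "(\<lambda>u. (1+u) powr l - l*u) x \<le> (\<lambda>u. (1+u) powr l - l*u) y"
  proof (rule DERIV_nonpos_imp_nonincreasing[OF assms(2)])
    fix u assume u: "y \<le> u" "u \<le> x"
    have d: "((\<lambda>u. (1+u) powr l - l*u) has_real_derivative
        l * (1+u) powr (l-1) - l*1) (at u)"
      by (rule DERIV_diff[OF dpw DERIV_cmult[OF DERIV_ident]]) (use u assms in auto)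
    have "(1+u) powr (l-1) \<le> 1" using u assms by (intro pw_le1) auto
    hence "l * (1+u) powr (l-1) - l*1 \<le> 0"
      using assms by (simp add: mult_left_le)
    with d show "\<exists>y. ((\<lambda>u. (1+u) powr l - l*u) has_real_derivative y) (at u) \<and> y \<le> 0"
      by blast
  qed
  thus ?thesis by simp
qed

theorem lemma2p6:
  fixes x a l :: real
  assumes "x \<ge> 0"
    and "0 \<le> a" "a \<le> 1"
    and "0 \<le> l" "l \<le> 1"
  shows "0 \<le> ln ((1 + l * x + (1 + sqrt (1 - a) * x) powr l - (1 + l * sqrt (1 - a) * x))
                  / (1 + x) powr l)
       \<and> ln ((1 + l * x + (1 + sqrt (1 - a) * x) powr l - (1 + l * sqrt (1 - a) * x))
                  / (1 + x) powr l) \<le> a * (l * (1 - l) / 2) * x ^ 2"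
proof -
  define s where "s = sqrt (1 - a)"
  define y where "y = s * x"
  define N where "N = (\<lambda>u. (1+u) powr l + l*(x-u))"
  define D where "D = (1+x) powr l"
  define c where "c = l * (1 - l) / 2"
  have s0: "0 \<le> s" "s \<le> 1" using assms by (auto simp: s_def)
  have ss: "s^2 = 1 - a" using assms by (simp add: s_def)
  have y0: "0 \<le> y" "y \<le> x" using s0 assms by (auto simp: y_def mult_left_le_one_le)
  have E: "1 + l * x + (1 + sqrt (1 - a) * x) powr l - (1 + l * sqrt (1 - a) * x) = N y"
    by (simp add: N_def y_def s_def algebra_simps)
  have D1: "1 \<le> D" unfolding D_def using powr_mono[of 0 l "1+x"] assms by simp
  have ND: "D \<le> N u" if "0 \<le> u" "u \<le> x" for u
    using lowb[OF that assms(4,5)] by (simp add: N_def D_def algebra_simps)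
  have NxD: "N x = D" by (simp add: N_def D_def)
  have low: "0 \<le> ln (N y / D)" using ND[OF y0] D1 by simp
  have "(\<lambda>u. ln (N u) + c * u^2) y \<le> (\<lambda>u. ln (N u) + c * u^2) x"
  proof (rule DERIV_nonneg_imp_nondecreasing[OF y0(2)])
    fix u assume u: "y \<le> u" "u \<le> x"
    have u0: "0 \<le> u" using u y0 by simp
    have Nu: "1 \<le> N u" using ND[OF u0 u(2)] D1 by simp
    have dN: "(N has_real_derivative l*(1+u) powr (l-1) + l*(0-1)) (at u)"
      unfolding N_def
      by (rule DERIV_add[OF dpw DERIV_cmult[OF DERIV_diff[OF DERIV_const DERIV_ident]]]) (use u0 in auto)
    have dl: "((\<lambda>u. ln (N u)) has_real_derivative (1 / N u) * (l*(1+u) powr (l-1) + l*(0-1))) (at u)"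
      by (rule DERIV_chain2[OF DERIV_ln_divide dN]) (use Nu in auto)
    have d: "((\<lambda>u. ln (N u) + c * u^2) has_real_derivative
       (1 / N u) * (l*(1+u) powr (l-1) + l*(0-1)) + c * (2 * u)) (at u)"
      using DERIV_add[OF dl DERIV_cmult[OF DERIV_pow[of 2 u]], of c] by simp
    define q where "q = 1 - (1+u) powr (l-1)"
    have q0: "0 \<le> q" using pw_le1[OF u0, of "l-1"] assms by (simp add: q_def)
    have qb: "q \<le> (1-l)*u" using bern[OF u0 assms(5)] by (simp add: q_def algebra_simps)
    have lq: "0 \<le> l * q" using q0 assms by simp
    have "l * q / N u \<le> l * q" using Nu lq
      by (simp add: divide_le_eq mult_le_cancel_left1)
    also have "\<dots> \<le> l * ((1-l)*u)" using qb assms by (simp add: mult_left_mono)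
    finally have key: "l * q / N u \<le> l * ((1-l)*u)" .
    have "0 \<le> (1 / N u) * (l*(1+u) powr (l-1) + l*(0-1)) + c * (2 * u)"
    proof -
      have e1: "(1 / N u) * (l*(1+u) powr (l-1) + l*(0-1)) = -(l * q / N u)"
        by (simp add: q_def diff_divide_distrib algebra_simps)
      have e2: "c * (2 * u) = l * ((1-l)*u)" by (simp add: c_def)
      show ?thesis unfolding e1 e2 using key by linarith
    qed
    with d show "\<exists>y. ((\<lambda>u. ln (N u) + c * u^2) has_real_derivative y) (at u) \<and> 0 \<le> y"
      by blast
  qed
  hence "ln (N y) + c * y^2 \<le> ln D + c * x^2" by (simp add: NxD)
  moreover have "ln (N y / D) = ln (N y) - ln D" using ND[OF y0] D1 by (simp add: ln_div)
  moreover have "y^2 = (1-a) * x^2" by (simp add: y_def power_mult_distrib ss)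
  ultimately have up: "ln (N y / D) \<le> a * c * x^2" by (simp add: algebra_simps)
  show ?thesis using low up by (simp add: E D_def c_def)
qed
end
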